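(* Suppose $\sigma$ is not surjective and $f\in D[t;\sigma]$ is monic of degree $m\ge2$ and irreducible. Then $S_f$ has no zero divisors and is a right division algebra but not a left division algebra. In particular, $S_f$ is an infinite-dimensional $S_0$-algebra.
   Context: $D$ is an associative division ring and $\sigma$ a ring endomorphism of $D$. $D[t;\sigma]$ is the skew polynomial ring with $ta=\sigma(a)t$. For monic $f$ of degree $m$, $S_f$ is the set of polynomials of degree $<m$ with multiplication $g\circ h=$ remainder of $gh$ upon right division by $f$. $S_0=\{a\in D: a\circ h=h\circ a \text{ for all } h\in S_f\}$, a commutative ring over which $S_f$ is an algebra. $f$ is irreducible if it is not a unit and has no factorization $f=gh$ with $\deg g,\deg h<\deg f$. $S_f$ is a right (resp. left) division algebra if $R_a(x)=x\circ a$ (resp. $L_a(x)=a\circ x$) is bijective for all nonzero $a$. *)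

theory Defs
  imports "HOL-Computational_Algebra.Polynomial"
begin

text \<open>Skew polynomial ring D[t;sigma] over a division ring D (type 'a), with t a = sigma(a) t.
  Elements are represented by their coefficient sequences ('a poly, used only as a
  container of coefficients); multiplication is the skew product below.\<close>

definition ring_endo :: "('a::division_ring \<Rightarrow> 'a) \<Rightarrow> bool" where
  "ring_endo \<sigma> \<longleftrightarrow> (\<forall>a b. \<sigma> (a + b) = \<sigma> a + \<sigma> b) \<and>
                     (\<forall>a b. \<sigma> (a * b) = \<sigma> a * \<sigma> b) \<and> \<sigma> 1 = 1"

definition skew_mult :: "('a::division_ring \<Rightarrow> 'a) \<Rightarrow> 'a poly \<Rightarrow> 'a poly \<Rightarrow> 'a poly" where
  "skew_mult \<sigma> p q = Poly (map (\<lambda>k. \<Sum>i\<le>k. coeff p i * (\<sigma> ^^ i) (coeff q (k - i)))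
                              [0..<degree p + degree q + 1])"

definition skew_unit :: "('a::division_ring \<Rightarrow> 'a) \<Rightarrow> 'a poly \<Rightarrow> bool" where
  "skew_unit \<sigma> f \<longleftrightarrow> (\<exists>g. skew_mult \<sigma> g f = [:1:] \<and> skew_mult \<sigma> f g = [:1:])"

definition skew_irreducible :: "('a::division_ring \<Rightarrow> 'a) \<Rightarrow> 'a poly \<Rightarrow> bool" where
  "skew_irreducible \<sigma> f \<longleftrightarrow> \<not> skew_unit \<sigma> f \<and>
     \<not> (\<exists>g h. degree g < degree f \<and> degree h < degree f \<and> f = skew_mult \<sigma> g h)"

definition skew_rmod :: "('a::division_ring \<Rightarrow> 'a) \<Rightarrow> 'a poly \<Rightarrow> 'a poly \<Rightarrow> 'a poly" where
  "skew_rmod \<sigma> g f = (THE r. degree r < degree f \<and> (\<exists>q. g = skew_mult \<sigma> q f + r))"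

definition Sf :: "'a::division_ring poly \<Rightarrow> 'a poly set" where
  "Sf f = {g. degree g < degree f}"

definition Sf_mult :: "('a::division_ring \<Rightarrow> 'a) \<Rightarrow> 'a poly \<Rightarrow> 'a poly \<Rightarrow> 'a poly \<Rightarrow> 'a poly" where
  "Sf_mult \<sigma> f g h = skew_rmod \<sigma> (skew_mult \<sigma> g h) f"

definition S0 :: "('a::division_ring \<Rightarrow> 'a) \<Rightarrow> 'a poly \<Rightarrow> 'a set" where
  "S0 \<sigma> f = {a. \<forall>h\<in>Sf f. Sf_mult \<sigma> f [:a:] h = Sf_mult \<sigma> f h [:a:]}"

definition Sf_no_zero_divisors :: "('a::division_ring \<Rightarrow> 'a) \<Rightarrow> 'a poly \<Rightarrow> bool" where
  "Sf_no_zero_divisors \<sigma> f \<longleftrightarrow>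
     (\<forall>g\<in>Sf f. \<forall>h\<in>Sf f. g \<noteq> 0 \<longrightarrow> h \<noteq> 0 \<longrightarrow> Sf_mult \<sigma> f g h \<noteq> 0)"

definition Sf_right_division :: "('a::division_ring \<Rightarrow> 'a) \<Rightarrow> 'a poly \<Rightarrow> bool" where
  "Sf_right_division \<sigma> f \<longleftrightarrow>
     (\<forall>a\<in>Sf f. a \<noteq> 0 \<longrightarrow> bij_betw (\<lambda>x. Sf_mult \<sigma> f x a) (Sf f) (Sf f))"

definition Sf_left_division :: "('a::division_ring \<Rightarrow> 'a) \<Rightarrow> 'a poly \<Rightarrow> bool" where
  "Sf_left_division \<sigma> f \<longleftrightarrow>
     (\<forall>a\<in>Sf f. a \<noteq> 0 \<longrightarrow> bij_betw (\<lambda>x. Sf_mult \<sigma> f a x) (Sf f) (Sf f))"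

definition Sf_finite_dim_over_S0 :: "('a::division_ring \<Rightarrow> 'a) \<Rightarrow> 'a poly \<Rightarrow> bool" where
  "Sf_finite_dim_over_S0 \<sigma> f \<longleftrightarrow>
     (\<exists>B. finite B \<and> B \<subseteq> Sf f \<and>
        (\<forall>g\<in>Sf f. \<exists>c. (\<forall>b\<in>B. c b \<in> S0 \<sigma> f) \<and>
                        g = (\<Sum>b\<in>B. Sf_mult \<sigma> f [:c b:] b)))"

end

theory Submission
  imports Defs
begin


lemma re_basic:
  assumes "ring_endo \<tau>"
  shows re_add: "\<tau> (a+b) = \<tau> a + \<tau> b" and re_mult: "\<tau> (a*b) = \<tau> a * \<tau> b"
   and re_one: "\<tau> 1 = 1" and re_zero: "\<tau> 0 = 0" and re_uminus: "\<tau> (-a) = - \<tau> a"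
   and re_diff: "\<tau> (a - b) = \<tau> a - \<tau> b"
proof -
  show A: "\<tau> (a+b) = \<tau> a + \<tau> b" "\<tau> (a*b) = \<tau> a * \<tau> b" "\<tau> 1 = 1"
    using assms unfolding ring_endo_def by auto
  have "\<tau> (0+0) = \<tau> 0 + \<tau> 0" using assms unfolding ring_endo_def by blast
  then show Z: "\<tau> 0 = 0" by simp
  have "\<tau> (a + -a) = \<tau> a + \<tau> (-a)" using assms unfolding ring_endo_def by blast
  then show U: "\<tau> (-a) = - \<tau> a" using Z by (simp add: add_eq_0_iff)
  have "\<tau> (b + -b) = \<tau> b + \<tau> (-b)" using assms unfolding ring_endo_def by blast
  then have "\<tau> (-b) = - \<tau> b" using Z by (simp add: add_eq_0_iff)
  moreover have "\<tau> (a + -b) = \<tau> a + \<tau> (-b)" using assms unfolding ring_endo_def by blast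
  ultimately show "\<tau> (a - b) = \<tau> a - \<tau> b"
    by (metis diff_conv_add_uminus)
qed

lemma re_inj0:
  assumes "ring_endo \<tau>" "\<tau> a = 0" shows "a = 0"
proof (rule ccontr)
  assume "a \<noteq> 0"
  then have "\<tau> (a * inverse a) = 1" using re_one[OF assms(1)] by simp
  then show False using assms re_mult[OF assms(1)] by simp
qed

lemma re_inj:
  assumes "ring_endo \<tau>" "\<tau> a = \<tau> b" shows "a = b"
  using re_inj0[OF assms(1), of "a - b"] re_diff[OF assms(1)] assms(2) by simp

lemma re_inverse:
  assumes "ring_endo \<tau>" shows "\<tau> (inverse a) = inverse (\<tau> a)"
proof (cases "a = 0")
  case True then show ?thesis using re_zero[OF assms] by simp
next
  case False
  then have "\<tau> a * \<tau> (inverse a) = 1" using re_mult[OF assms, symmetric] re_one[OF assms] by simp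
  then show ?thesis using inverse_unique by metis
qed

lemma re_sum:
  assumes "ring_endo \<tau>" shows "\<tau> (\<Sum>i\<in>A. g i) = (\<Sum>i\<in>A. \<tau> (g i))"
  by (induction A rule: infinite_finite_induct) (auto simp: re_zero[OF assms] re_add[OF assms])

lemma re_funpow:
  assumes "ring_endo \<sigma>" shows "ring_endo (\<sigma> ^^ n)"
  by (induction n) (use assms in \<open>auto simp: ring_endo_def\<close>)

lemma coeff_skew_mult:
  assumes "ring_endo \<sigma>"
  shows "coeff (skew_mult \<sigma> p q) k = (\<Sum>i\<le>k. coeff p i * (\<sigma> ^^ i) (coeff q (k - i)))"
proof (cases "k < degree p + degree q + 1")
  case True
  then show ?thesis unfolding skew_mult_def by (simp add: nth_default_def del: upt_Suc)
next
  case False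
  have Z0: "coeff p i * (\<sigma> ^^ i) (coeff q (k - i)) = 0" for i
  proof (cases "i \<le> degree p")
    case True
    then have "coeff q (k - i) = 0" using False by (intro coeff_eq_0) auto
    then show ?thesis using re_zero[OF re_funpow[OF assms]] by simp
  next
    case False
    then show ?thesis by (simp add: coeff_eq_0)
  qed
  then have "(\<Sum>i\<le>k. coeff p i * (\<sigma> ^^ i) (coeff q (k - i))) = 0"
    by (intro sum.neutral ballI Z0)
  with False show ?thesis unfolding skew_mult_def by (simp add: nth_default_def)
qed

lemma sum_single:
  assumes "finite A" "a \<in> A" "\<And>i. i \<in> A \<Longrightarrow> i \<noteq> a \<Longrightarrow> g i = 0"
  shows "sum g A = g a"
proof -
  have "sum g A = sum g {a}" using assms by (intro sum.mono_neutral_right) auto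
  then show ?thesis by simp
qed

definition lsm :: "'a::division_ring \<Rightarrow> 'a poly \<Rightarrow> 'a poly" where
  "lsm c p = map_poly ((*) c) p"

lemma coeff_lsm[simp]: "coeff (lsm c p) n = c * coeff p n"
  unfolding lsm_def by (simp add: coeff_map_poly)

lemma lsm_add: "lsm c (p + q) = lsm c p + lsm c q"
  by (rule poly_eqI) (simp add: distrib_left)
lemma lsm_add2: "lsm (c + d) p = lsm c p + lsm d p"
  by (rule poly_eqI) (simp add: distrib_right)
lemma lsm_mult: "lsm (c * d) p = lsm c (lsm d p)"
  by (rule poly_eqI) (simp add: mult.assoc)
lemma lsm_one[simp]: "lsm 1 p = p"
  by (rule poly_eqI) simp
lemma lsm_zero[simp]: "lsm c 0 = 0" "lsm 0 p = 0"
  by (rule poly_eqI, simp)+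
lemma lsm_diff: "lsm c (p - q) = lsm c p - lsm c q"
  by (rule poly_eqI) (simp add: right_diff_distrib)
lemma lsm_minus: "lsm (- c) p = - lsm c p"
  by (rule poly_eqI) simp
lemma lsm_sum: "lsm c (\<Sum>i\<in>A. g i) = (\<Sum>i\<in>A. lsm c (g i))"
  by (rule poly_eqI) (simp add: coeff_sum sum_distrib_left)
lemma lsm_sum2: "lsm (\<Sum>i\<in>A. g i) p = (\<Sum>i\<in>A. lsm (g i) p)"
  by (rule poly_eqI) (simp add: coeff_sum sum_distrib_right)
lemma degree_lsm: "degree (lsm c p) \<le> degree p"
  by (rule degree_le) (simp add: coeff_eq_0)

context
  fixes \<sigma> :: "'a::division_ring \<Rightarrow> 'a"
  assumes R: "ring_endo \<sigma>"
begin

abbreviation mul where "mul \<equiv> skew_mult \<sigma>"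

lemmas cm = coeff_skew_mult[OF R]

lemma Rp: "ring_endo (\<sigma> ^^ n)" by (rule re_funpow[OF R])

lemma mul_0[simp]: "mul 0 q = 0" "mul p 0 = 0"
  by (rule poly_eqI, simp add: cm re_zero[OF Rp])+

lemma mul_add_left: "mul (p + p') q = mul p q + mul p' q"
  by (rule poly_eqI) (simp add: cm distrib_right sum.distrib)

lemma mul_add_right: "mul p (q + q') = mul p q + mul p q'"
  by (rule poly_eqI) (simp add: cm distrib_left sum.distrib re_add[OF Rp])

lemma mul_diff_left: "mul (p - p') q = mul p q - mul p' q"
  by (rule poly_eqI) (simp add: cm left_diff_distrib sum_subtractf)

lemma mul_diff_right: "mul p (q - q') = mul p q - mul p q'"
  by (rule poly_eqI) (simp add: cm right_diff_distrib sum_subtractf re_diff[OF Rp])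

lemma mul_lsm: "mul (lsm c p) q = lsm c (mul p q)"
  by (rule poly_eqI) (simp add: cm sum_distrib_left mult.assoc)

lemma mul_const: "mul [:c:] p = lsm c p"
proof (rule poly_eqI)
  fix n
  have "(\<Sum>i\<le>n. coeff [:c:] i * (\<sigma> ^^ i) (coeff p (n - i))) = coeff [:c:] 0 * (\<sigma> ^^ 0) (coeff p (n - 0))"
    by (rule sum_single) (auto simp: coeff_pCons split: nat.splits)
  then show "coeff (mul [:c:] p) n = coeff (lsm c p) n" by (simp add: cm)
qed

lemma coeff_mul_high:
  assumes "k > degree p + degree q"
  shows "coeff (mul p q) k = 0"
proof -
  have Z0: "coeff p i * (\<sigma> ^^ i) (coeff q (k - i)) = 0" for i
  proof (cases "i \<le> degree p")
    case True
    then have "coeff q (k - i) = 0" using assms by (intro coeff_eq_0) auto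
    then show ?thesis using re_zero[OF Rp] by simp
  next
    case False
    then show ?thesis by (simp add: coeff_eq_0)
  qed
  show ?thesis by (simp add: cm Z0)
qed

lemma degree_mul_le: "degree (mul p q) \<le> degree p + degree q"
  by (rule degree_le) (auto intro: coeff_mul_high)

lemma coeff_mul_top:
  "coeff (mul p q) (degree p + degree q) = lead_coeff p * (\<sigma> ^^ degree p) (lead_coeff q)"
proof -
  let ?k = "degree p + degree q"
  have "(\<Sum>i\<le>?k. coeff p i * (\<sigma> ^^ i) (coeff q (?k - i))) =
        coeff p (degree p) * (\<sigma> ^^ degree p) (coeff q (?k - degree p))"
  proof (rule sum_single)
      fix i assume i: "i \<in> {..?k}" "i \<noteq> degree p"
      show "coeff p i * (\<sigma> ^^ i) (coeff q (?k - i)) = 0"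
      proof (cases "i < degree p")
        case True
        then have "coeff q (?k - i) = 0" by (intro coeff_eq_0) auto
        then show ?thesis using re_zero[OF Rp] by simp
      next
        case False
        then have "i > degree p" using i by auto
        then show ?thesis by (simp add: coeff_eq_0)
      qed
  qed auto
  then show ?thesis by (simp add: cm)
qed

lemma mul_nz_lead:
  assumes "p \<noteq> 0" "q \<noteq> 0"
  shows "coeff (mul p q) (degree p + degree q) \<noteq> 0"
proof -
  have "(\<sigma> ^^ degree p) (lead_coeff q) \<noteq> 0"
    using re_inj0[OF Rp, of "degree p" "lead_coeff q"] assms by auto
  then show ?thesis using assms by (simp add: coeff_mul_top)
qed

lemma degree_mul:
  assumes "p \<noteq> 0" "q \<noteq> 0"
  shows "degree (mul p q) = degree p + degree q"
  using degree_mul_le[of p q] le_degree[OF mul_nz_lead[OF assms]] by linarith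

lemma mul_nz:
  assumes "p \<noteq> 0" "q \<noteq> 0"
  shows "mul p q \<noteq> 0"
  using mul_nz_lead[OF assms] by auto

lemma mul_assoc: "mul (mul p q) r = mul p (mul q r)"
proof (rule poly_eqI)
  fix k
  define G where "G i j = coeff p i * (\<sigma> ^^ i) (coeff q j) * (\<sigma> ^^ (i + j)) (coeff r (k - i - j))" for i j
  have "coeff (mul (mul p q) r) k = (\<Sum>s\<le>k. \<Sum>i\<le>s. G i (s - i))"
  proof -
    have "coeff (mul (mul p q) r) k = (\<Sum>s\<le>k. (\<Sum>i\<le>s. coeff p i * (\<sigma> ^^ i) (coeff q (s - i))) * (\<sigma> ^^ s) (coeff r (k - s)))"
      by (simp add: cm)
    also have "\<dots> = (\<Sum>s\<le>k. \<Sum>i\<le>s. G i (s - i))"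
      by (rule sum.cong[OF refl]) (auto simp: sum_distrib_right G_def intro!: sum.cong)
    finally show ?thesis .
  qed
  also have "\<dots> = (\<Sum>(i,j)\<in>{(i,j). i+j \<le> k}. G i j)"
    by (rule sum.triangle_reindex_eq[symmetric])
  also have "{(i,j). i+j \<le> k} = Sigma {..k} (\<lambda>i. {..k-i})" by auto
  also have "(\<Sum>(i,j)\<in>Sigma {..k} (\<lambda>i. {..k-i}). G i j) = (\<Sum>i\<le>k. \<Sum>j\<le>k-i. G i j)"
    by (rule sum.Sigma[symmetric]) auto
  also have "\<dots> = coeff (mul p (mul q r)) k"
    by (auto simp: cm G_def sum_distrib_left re_sum[OF Rp] re_mult[OF Rp] funpow_add mult.assoc
        intro!: sum.cong)
  finally show "coeff (mul (mul p q) r) k = coeff (mul p (mul q r)) k" .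
qed


lemma right_div:
  assumes "h \<noteq> 0"
  shows "\<exists>q r. g = mul q h + r \<and> (r = 0 \<or> degree r < degree h)"
proof (induction "degree g" arbitrary: g rule: less_induct)
  case less
  show ?case
  proof (cases "g = 0 \<or> degree g < degree h")
    case True
    then show ?thesis by (intro exI[of _ 0] exI[of _ g]) auto
  next
    case False
    then have g0: "g \<noteq> 0" and dg: "degree h \<le> degree g" by auto
    define n where "n = degree g - degree h"
    define c where "c = lead_coeff g * inverse ((\<sigma> ^^ n) (lead_coeff h))"
    have lh: "(\<sigma> ^^ n) (lead_coeff h) \<noteq> 0"
      using re_inj0[OF Rp, of n "lead_coeff h"] assms by auto
    have c0: "c \<noteq> 0" using g0 lh by (simp add: c_def)
    define M where "M = monom c n"
    have M0: "M \<noteq> 0" and dM: "degree M = n" and lM: "lead_coeff M = c"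
      using c0 by (auto simp: M_def degree_monom_eq)
    have dMh: "degree (mul M h) = degree g"
      using degree_mul[OF M0 assms] dM dg n_def by simp
    have tMh: "coeff (mul M h) (degree g) = lead_coeff g"
      using coeff_mul_top[of M h] dM lM dg n_def lh c_def by (simp add: mult.assoc)
    define g' where "g' = g - mul M h"
    have gg: "g = mul M h + g'" by (simp add: g'_def)
    have hi: "coeff g' k = 0" if "k \<ge> degree g" for k
    proof (cases "k = degree g")
      case True then show ?thesis using tMh by (simp add: g'_def)
    next
      case False then have "k > degree g" using that by simp
      then show ?thesis using dMh by (simp add: g'_def coeff_eq_0)
    qed
    show ?thesis
    proof (cases "g' = 0")
      case True
      then show ?thesis using gg by (intro exI[of _ M] exI[of _ 0]) simp
    next
      case False
      have "degree g' < degree g"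
      proof (rule ccontr)
        assume "\<not> degree g' < degree g"
        then have "coeff g' (degree g') = 0" using hi by simp
        then show False using False by simp
      qed
      from less(1)[OF this] obtain q r where qr: "g' = mul q h + r" "r = 0 \<or> degree r < degree h" by blast
      have "g = mul (M + q) h + r" using gg qr by (simp add: mul_add_left)
      then show ?thesis using qr(2) by blast
    qed
  qed
qed

lemma rmod_eq:
  assumes "0 < degree f" "g = mul q f + r" "degree r < degree f"
  shows "skew_rmod \<sigma> g f = r"
  unfolding skew_rmod_def
proof (rule the_equality)
  show "degree r < degree f \<and> (\<exists>q. g = mul q f + r)" using assms by blast
next
  fix r' assume "degree r' < degree f \<and> (\<exists>q. g = mul q f + r')"
  then obtain q' where r': "degree r' < degree f" "g = mul q' f + r'" by blast
  have f0: "f \<noteq> 0" using assms(1) by auto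
  have e: "mul (q - q') f = r' - r" using assms(2) r'(2) by (simp add: mul_diff_left algebra_simps)
  show "r' = r"
  proof (cases "q = q'")
    case True then show ?thesis using e by simp
  next
    case False
    then have "q - q' \<noteq> 0" by simp
    then have "degree (mul (q - q') f) \<ge> degree f" "mul (q - q') f \<noteq> 0"
      using degree_mul[OF _ f0] mul_nz[OF _ f0] by auto
    moreover have "degree (r' - r) < degree f"
      using degree_diff_le_max[of r' r] r'(1) assms(3) by linarith
    ultimately show ?thesis using e by simp
  qed
qed

lemma rmod_ex:
  assumes "0 < degree f"
  shows "degree (skew_rmod \<sigma> g f) < degree f \<and> (\<exists>q. g = mul q f + skew_rmod \<sigma> g f)"
proof -
  have "f \<noteq> 0" using assms by auto
  from right_div[OF this, of g] obtain q r where qr: "g = mul q f + r" "r = 0 \<or> degree r < degree f" by blast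
  then have dr: "degree r < degree f" using assms by auto
  have "skew_rmod \<sigma> g f = r" by (rule rmod_eq[OF assms qr(1) dr])
  then show ?thesis using qr dr by auto
qed

lemma ore:
  assumes "x \<noteq> 0" "u \<noteq> 0"
  shows "\<exists>y z. y \<noteq> 0 \<and> mul y u = mul z x \<and> degree y \<le> degree x"
  using assms
proof (induction "degree x" arbitrary: x u rule: less_induct)
  case less
  from right_div[OF less(2), of u] obtain s r where sr: "u = mul s x + r" "r = 0 \<or> degree r < degree x" by blast
  show ?case
  proof (cases "r = 0")
    case True
    then have "mul [:1:] u = mul s x" using sr by (simp add: mul_const)
    then show ?thesis by (intro exI[of _ "[:1:]"] exI[of _ s]) auto
  next
    case False
    then have dr: "degree r < degree x" using sr by auto
    from less(1)[OF dr False less(2)] obtain y' z' where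
      yz: "y' \<noteq> 0" "mul y' x = mul z' r" "degree y' \<le> degree r" by blast
    have "mul z' u = mul (mul z' s) x + mul y' x"
      using sr(1) yz(2) by (simp add: mul_add_right mul_assoc)
    also have "\<dots> = mul (mul z' s + y') x" by (simp add: mul_add_left)
    finally have e: "mul z' u = mul (mul z' s + y') x" .
    have yx: "mul y' x \<noteq> 0" using mul_nz[OF yz(1) less(2)] .
    then have z0: "z' \<noteq> 0" using yz(2) by auto
    have "degree z' + degree r = degree y' + degree x"
      using degree_mul[OF z0 False] degree_mul[OF yz(1) less(2)] yz(2) by simp
    then have "degree z' \<le> degree x" using yz(3) by linarith
    then show ?thesis using e z0 by blast
  qed
qed

lemma nzd_core:
  assumes irr: "\<not> (\<exists>g h. degree g < degree f \<and> degree h < degree f \<and> f = mul g h)"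
    and df: "0 < degree f"
  shows "a \<noteq> 0 \<Longrightarrow> degree a < degree f \<Longrightarrow> x \<noteq> 0 \<Longrightarrow> degree x < degree f
     \<Longrightarrow> mul x a = mul q f \<Longrightarrow> False"
proof (induction "degree a" arbitrary: a x q rule: less_induct)
  case less
  have f0: "f \<noteq> 0" using df by auto
  have xa: "mul x a \<noteq> 0" "degree (mul x a) = degree x + degree a"
    using mul_nz[OF less(4) less(2)] degree_mul[OF less(4) less(2)] by auto
  then have q0: "q \<noteq> 0" using less(6) by auto
  have dq: "degree (mul q f) = degree q + degree f" using degree_mul[OF q0 f0] .
  show False
  proof (cases "degree a = 0")
    case True
    then show False using xa dq less(5,6) by simp
  next
    case False
    from right_div[OF less(2), of f] obtain u r where ur: "f = mul u a + r" "r = 0 \<or> degree r < degree a" by blast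
    have u0: "u \<noteq> 0"
    proof
      assume "u = 0"
      then have "f = r" using ur by simp
      then show False using ur(2) f0 less(3) by auto
    qed
    show False
    proof (cases "r = 0")
      case True
      then have "f = mul u a" using ur by simp
      moreover have "degree u < degree f"
        using degree_mul[OF u0 less(2)] False calculation by simp
      ultimately show False using irr less(3) by blast
    next
      case r0: False
      then have dr: "degree r < degree a" using ur by auto
      from ore[OF less(4) u0] obtain y z where yz: "y \<noteq> 0" "mul y u = mul z x" "degree y \<le> degree x" by blast
      have rr: "r = f - mul u a" using ur(1) by (simp add: algebra_simps)
      have "mul y r = mul y f - mul (mul y u) a" by (simp add: rr mul_diff_right mul_assoc)
      also have "\<dots> = mul y f - mul (mul z q) f" using yz(2) less(6) by (simp add: mul_assoc)
      also have "\<dots> = mul (y - mul z q) f" by (simp add: mul_diff_left)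
      finally have e: "mul y r = mul (y - mul z q) f" .
      show False
        by (rule less(1)[OF dr r0 _ yz(1) _ e]) (use dr less(3) yz(3) less(5) in auto)
    qed
  qed
qed

end



definition subdr :: "'a::division_ring set \<Rightarrow> bool" where
  "subdr K \<longleftrightarrow> 1 \<in> K \<and> 0 \<in> K \<and> (\<forall>a\<in>K. \<forall>b\<in>K. a + b \<in> K \<and> a - b \<in> K \<and> a * b \<in> K)
     \<and> (\<forall>a\<in>K. inverse a \<in> K)"

lemma subdr_sum: "subdr K \<Longrightarrow> (\<And>i. i \<in> A \<Longrightarrow> g i \<in> K) \<Longrightarrow> (\<Sum>i\<in>A. g i) \<in> K"
  by (induction A rule: infinite_finite_induct) (auto simp: subdr_def)

lemma subdr_neg: "subdr K \<Longrightarrow> a \<in> K \<Longrightarrow> - a \<in> K"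
  unfolding subdr_def by (metis diff_0)

lemma lsm_diff2: "lsm (c - d) p = lsm c p - lsm d p"
  by (rule poly_eqI) (simp add: left_diff_distrib)

lemma steinitz:
  assumes K: "subdr K"
  shows "finite I \<Longrightarrow> finite J \<Longrightarrow> card I < card J \<Longrightarrow>
    (\<forall>j\<in>J. \<exists>c. (\<forall>i\<in>I. c i \<in> K) \<and> w j = (\<Sum>i\<in>I. lsm (c i) (v i))) \<Longrightarrow>
    \<exists>l. (\<forall>j\<in>J. l j \<in> K) \<and> (\<exists>j\<in>J. l j \<noteq> 0) \<and> (\<Sum>j\<in>J. lsm (l j) (w j)) = 0"
proof (induction I arbitrary: J w rule: finite_induct)
  case empty
  then have "J \<noteq> {}" by auto
  then show ?case using empty K by (intro exI[of _ "\<lambda>_. 1"]) (auto simp: subdr_def)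
next
  case (insert i0 I)
  from insert(6) obtain C where C: "\<forall>j\<in>J. (\<forall>i\<in>insert i0 I. C j i \<in> K) \<and>
      w j = (\<Sum>i\<in>insert i0 I. lsm (C j i) (v i))" by metis
  have wj: "w j = lsm (C j i0) (v i0) + (\<Sum>i\<in>I. lsm (C j i) (v i))" if "j \<in> J" for j
    using C that insert(1,2) by simp
  have cI: "card (insert i0 I) = Suc (card I)" using insert(1,2) by simp
  show ?case
  proof (cases "\<forall>j\<in>J. C j i0 = 0")
    case True
    have "\<forall>j\<in>J. \<exists>c. (\<forall>i\<in>I. c i \<in> K) \<and> w j = (\<Sum>i\<in>I. lsm (c i) (v i))"
    proof
      fix j assume "j \<in> J"
      then show "\<exists>c. (\<forall>i\<in>I. c i \<in> K) \<and> w j = (\<Sum>i\<in>I. lsm (c i) (v i))"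
        using wj[of j] True C by (intro exI[of _ "C j"]) auto
    qed
    then show ?thesis using insert(3)[OF insert(4)] insert(5) cI by simp
  next
    case False
    then obtain p where p: "p \<in> J" "C p i0 \<noteq> 0" by blast
    define e where "e = C p i0"
    define J' where "J' = J - {p}"
    have fJ': "finite J'" using insert(4) by (simp add: J'_def)
    have cJ': "card I < card J'" using insert(5) cI p(1) insert(4) by (simp add: J'_def)
    define w' where "w' j = w j - lsm (C j i0 * inverse e) (w p)" for j
    have eK: "inverse e \<in> K" using C p K by (auto simp: subdr_def e_def)
    have "\<forall>j\<in>J'. \<exists>c. (\<forall>i\<in>I. c i \<in> K) \<and> w' j = (\<Sum>i\<in>I. lsm (c i) (v i))"
    proof
      fix j assume j: "j \<in> J'"
      then have jJ: "j \<in> J" by (simp add: J'_def)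
      define d where "d = C j i0 * inverse e"
      have dK: "d \<in> K" using C jJ eK K unfolding d_def subdr_def by blast
      have de: "d * e = C j i0" using p(2) by (simp add: d_def e_def mult.assoc)
      have "w' j = lsm (C j i0) (v i0) + (\<Sum>i\<in>I. lsm (C j i) (v i))
           - lsm d (lsm e (v i0) + (\<Sum>i\<in>I. lsm (C p i) (v i)))"
        unfolding w'_def d_def e_def using wj[OF jJ] wj[OF p(1)] by simp
      also have "\<dots> = (\<Sum>i\<in>I. lsm (C j i) (v i)) - (\<Sum>i\<in>I. lsm (d * C p i) (v i))"
        by (simp add: lsm_add lsm_sum lsm_mult[symmetric] de)
      also have "\<dots> = (\<Sum>i\<in>I. lsm (C j i - d * C p i) (v i))"
        by (simp add: lsm_diff2 sum_subtractf)
      finally have "w' j = (\<Sum>i\<in>I. lsm (C j i - d * C p i) (v i))" .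
      moreover have "\<forall>i\<in>I. C j i - d * C p i \<in> K"
        using C jJ p(1) dK K unfolding subdr_def by blast
      ultimately show "\<exists>c. (\<forall>i\<in>I. c i \<in> K) \<and> w' j = (\<Sum>i\<in>I. lsm (c i) (v i))"
        by (intro exI[of _ "\<lambda>i. C j i - d * C p i"]) auto
    qed
    from insert(3)[OF fJ' cJ' this] obtain l where
      l: "\<forall>j\<in>J'. l j \<in> K" "\<exists>j\<in>J'. l j \<noteq> 0" "(\<Sum>j\<in>J'. lsm (l j) (w' j)) = 0" by blast
    define S where "S = (\<Sum>j\<in>J'. l j * (C j i0 * inverse e))"
    define l' where "l' j = (if j = p then - S else l j)" for j
    have SK: "S \<in> K" unfolding S_def
      using l(1) C eK K by (intro subdr_sum) (auto simp: subdr_def J'_def)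
    have "0 = (\<Sum>j\<in>J'. lsm (l j) (w j)) - (\<Sum>j\<in>J'. lsm (l j * (C j i0 * inverse e)) (w p))"
      using l(3) by (simp add: w'_def lsm_diff lsm_mult sum_subtractf)
    also have "\<dots> = (\<Sum>j\<in>J'. lsm (l j) (w j)) - lsm S (w p)"
      by (simp add: S_def lsm_sum2)
    finally have e0: "(\<Sum>j\<in>J'. lsm (l j) (w j)) = lsm S (w p)" by simp
    have "(\<Sum>j\<in>J. lsm (l' j) (w j)) = lsm (l' p) (w p) + (\<Sum>j\<in>J'. lsm (l' j) (w j))"
      using p(1) insert(4) unfolding J'_def by (simp add: sum.remove)
    also have "(\<Sum>j\<in>J'. lsm (l' j) (w j)) = (\<Sum>j\<in>J'. lsm (l j) (w j))"
      by (rule sum.cong) (auto simp: l'_def J'_def)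
    also have "lsm (l' p) (w p) + (\<Sum>j\<in>J'. lsm (l j) (w j)) = 0" by (simp add: e0 l'_def lsm_minus)
    finally have "(\<Sum>j\<in>J. lsm (l' j) (w j)) = 0" .
    moreover have "\<forall>j\<in>J. l' j \<in> K" using l(1) SK K subdr_neg by (auto simp: l'_def J'_def)
    moreover have "\<exists>j\<in>J. l' j \<noteq> 0" using l(2) by (auto simp: l'_def J'_def)
    ultimately show ?thesis by blast
  qed
qed



lemma subdr_UNIV: "subdr UNIV" by (simp add: subdr_def)

lemma span_monoms:
  assumes "degree p < m"
  shows "p = (\<Sum>i\<in>{..<m}. lsm (coeff p i) (monom 1 i))"
proof (rule poly_eqI)
  fix n
  have "(\<Sum>i\<in>{..<m}. coeff p i * (if i = n then 1 else 0)) = coeff p n"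
  proof (cases "n < m")
    case True
    then show ?thesis by (subst sum_single[of _ n]) auto
  next
    case False
    then have "coeff p n = 0" using assms by (intro coeff_eq_0) auto
    moreover have "(\<Sum>i\<in>{..<m}. coeff p i * (if i = n then 1 else 0)) = 0"
      using False by (intro sum.neutral) auto
    ultimately show ?thesis by simp
  qed
  then show "coeff p n = coeff (\<Sum>i\<in>{..<m}. lsm (coeff p i) (monom 1 i)) n"
    by (simp add: coeff_sum)
qed

lemma coeff_span_monoms:
  "coeff (\<Sum>i\<in>{..<m}. lsm (l i) (monom 1 i)) n = (if n < m then l n else 0)"
proof (cases "n < m")
  case True
  then show ?thesis by (simp add: coeff_sum, subst sum_single[of _ n]) auto
next
  case False
  have "(\<Sum>i\<in>{..<m}. l i * (if i = n then 1 else 0)) = 0"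
      using False by (intro sum.neutral) auto
  then show ?thesis using False by (simp add: coeff_sum)
qed

lemma degree_lsm_add: "degree r < m \<Longrightarrow> degree r' < m \<Longrightarrow> degree (lsm c r + r') < m"
  using degree_lsm[of c r] degree_add_le_max[of "lsm c r" r'] by linarith

context
  fixes \<sigma> :: "'a::division_ring \<Rightarrow> 'a" and f :: "'a poly"
  assumes R: "ring_endo \<sigma>" and df: "0 < degree f"
begin

abbreviation rmod where "rmod g \<equiv> skew_rmod \<sigma> g f"

lemma rmod_lin: "rmod (lsm c g + g') = lsm c (rmod g) + rmod g'"
proof -
  obtain q q' where e1: "g = skew_mult \<sigma> q f + rmod g" and e2: "g' = skew_mult \<sigma> q' f + rmod g'"
    using rmod_ex[OF R df] by metis
  have "lsm c g + g' = lsm c (skew_mult \<sigma> q f + rmod g) + (skew_mult \<sigma> q' f + rmod g')"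
    by (simp only: e1[symmetric] e2[symmetric])
  also have "\<dots> = skew_mult \<sigma> (lsm c q + q') f + (lsm c (rmod g) + rmod g')"
    by (simp add: mul_add_left[OF R] mul_lsm[OF R] lsm_add algebra_simps)
  finally have "lsm c g + g' = skew_mult \<sigma> (lsm c q + q') f + (lsm c (rmod g) + rmod g')" .
  moreover have "degree (lsm c (rmod g) + rmod g') < degree f"
    using rmod_ex[OF R df] by (intro degree_lsm_add) auto
  ultimately show ?thesis by (intro rmod_eq[OF R df])
qed

lemma rmod_0: "rmod 0 = 0"
  by (rule rmod_eq[OF R df, of _ 0]) (use df mul_0[OF R] in auto)

lemma rmod_small: "degree g < degree f \<Longrightarrow> rmod g = g"
  by (rule rmod_eq[OF R df, of _ 0]) (auto simp: mul_0[OF R])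

lemma rmod_diff: "rmod (g - g') = rmod g - rmod g'"
  using rmod_lin[of "-1" g' g] by (simp add: lsm_minus)

lemma rmod_sum: "rmod (\<Sum>i\<in>A. lsm (c i) (g i)) = (\<Sum>i\<in>A. lsm (c i) (rmod (g i)))"
proof (induction A rule: infinite_finite_induct)
  case (insert x F)
  then show ?case using rmod_lin[of "c x" "g x" "\<Sum>i\<in>F. lsm (c i) (g i)"] by simp
qed (auto simp: rmod_0)

lemma mul_sum_left: "skew_mult \<sigma> (\<Sum>i\<in>A. lsm (c i) (g i)) a = (\<Sum>i\<in>A. lsm (c i) (skew_mult \<sigma> (g i) a))"
  by (induction A rule: infinite_finite_induct) (auto simp: mul_add_left[OF R] mul_lsm[OF R] mul_0[OF R])

end



lemma lsm_uminus: "lsm c (- p) = - lsm c p"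
  by (rule poly_eqI) simp

context
  fixes \<sigma> :: "'a::division_ring \<Rightarrow> 'a" and f :: "'a poly"
  assumes R: "ring_endo \<sigma>" and df2: "2 \<le> degree f"
    and irr: "\<not> (\<exists>g h. degree g < degree f \<and> degree h < degree f \<and> f = skew_mult \<sigma> g h)"
begin

lemma df: "0 < degree f" using df2 by simp

lemma inj_R:
  assumes "a \<noteq> 0" "degree a < degree f" "degree x < degree f" "degree y < degree f"
    "skew_rmod \<sigma> (skew_mult \<sigma> x a) f = skew_rmod \<sigma> (skew_mult \<sigma> y a) f"
  shows "x = y"
proof (rule ccontr)
  assume xy: "x \<noteq> y"
  have "skew_rmod \<sigma> (skew_mult \<sigma> (x - y) a) f = 0"
    using assms(5) by (simp add: mul_diff_left[OF R] rmod_diff[OF R df])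
  then obtain q where q: "skew_mult \<sigma> (x - y) a = skew_mult \<sigma> q f"
    using rmod_ex[OF R df, of "skew_mult \<sigma> (x - y) a"] by auto
  have "degree (x - y) < degree f"
    using degree_diff_le_max[of x y] assms(3,4) by linarith
  then show False
    using nzd_core[OF R irr df assms(1,2) _ _ q] xy by simp
qed

lemma nzd: "Sf_no_zero_divisors \<sigma> f"
  unfolding Sf_no_zero_divisors_def
proof (intro ballI impI)
  fix g h assume g: "g \<in> Sf f" and h: "h \<in> Sf f" and g0: "g \<noteq> 0" and h0: "h \<noteq> 0"
  show "Sf_mult \<sigma> f g h \<noteq> 0"
  proof
    assume "Sf_mult \<sigma> f g h = 0"
    then obtain q where q: "skew_mult \<sigma> g h = skew_mult \<sigma> q f"
      using rmod_ex[OF R df, of "skew_mult \<sigma> g h"] unfolding Sf_mult_def by auto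
    show False using nzd_core[OF R irr df h0 _ g0 _ q] g h by (simp add: Sf_def)
  qed
qed

lemma rdiv: "Sf_right_division \<sigma> f"
  unfolding Sf_right_division_def
proof (intro ballI impI)
  fix a assume aS: "a \<in> Sf f" and a0: "a \<noteq> 0"
  let ?m = "degree f"
  define Ra where "Ra x = Sf_mult \<sigma> f x a" for x
  have da: "degree a < ?m" using aS by (simp add: Sf_def)
  have RaS: "Ra x \<in> Sf f" for x using rmod_ex[OF R df] by (simp add: Ra_def Sf_mult_def Sf_def)
  have inj: "inj_on Ra (Sf f)"
    by (rule inj_onI) (use inj_R[OF a0 da] in \<open>auto simp: Sf_def Ra_def Sf_mult_def\<close>)
  have sur: "y \<in> Ra ` Sf f" if yS: "y \<in> Sf f" for y
  proof -
    define w where "w j = (if j < ?m then Ra (monom 1 j) else y)" for j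
    have "\<forall>j\<in>{..?m}. \<exists>c. (\<forall>i\<in>{..<?m}. c i \<in> UNIV) \<and> w j = (\<Sum>i\<in>{..<?m}. lsm (c i) (monom 1 i))"
    proof
      fix j assume "j \<in> {..?m}"
      have "degree (w j) < ?m" using RaS yS by (simp add: w_def Sf_def)
      then show "\<exists>c. (\<forall>i\<in>{..<?m}. c i \<in> UNIV) \<and> w j = (\<Sum>i\<in>{..<?m}. lsm (c i) (monom 1 i))"
        using span_monoms by blast
    qed
    from steinitz[OF subdr_UNIV _ _ _ this] obtain l where
      l: "\<exists>j\<in>{..?m}. l j \<noteq> 0" "(\<Sum>j\<in>{..?m}. lsm (l j) (w j)) = 0" by auto
    define X where "X = (\<Sum>i\<in>{..<?m}. lsm (l i) (monom 1 i))"
    have dX: "degree X < ?m" using df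
      by (intro le_less_trans[OF degree_le[of "?m - 1"]]) (auto simp: X_def coeff_span_monoms)
    have RX: "Ra X = (\<Sum>i\<in>{..<?m}. lsm (l i) (Ra (monom 1 i)))"
      unfolding Ra_def Sf_mult_def X_def by (simp add: mul_sum_left[OF R df] rmod_sum[OF R df])
    have "(\<Sum>j\<in>{..?m}. lsm (l j) (w j)) = lsm (l ?m) y + (\<Sum>i\<in>{..<?m}. lsm (l i) (w i))"
      by (simp add: lessThan_Suc_atMost[symmetric] w_def)
    also have "(\<Sum>i\<in>{..<?m}. lsm (l i) (w i)) = Ra X"
      unfolding RX by (rule sum.cong) (auto simp: w_def)
    finally have e: "lsm (l ?m) y + Ra X = 0" using l(2) by simp
    show ?thesis
    proof (cases "l ?m = 0")
      case True
      then have "Ra X = Ra 0" using e by (simp add: Ra_def Sf_mult_def rmod_0[OF R df] mul_0[OF R])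
      then have "X = 0" using inj dX df unfolding inj_on_def Sf_def by auto
      moreover obtain j where "j \<le> ?m" "l j \<noteq> 0" using l(1) by auto
      ultimately have False using True coeff_span_monoms[of l ?m j]
        by (cases "j < ?m") (auto simp: X_def)
      then show ?thesis ..
    next
      case False
      define X' where "X' = lsm (- inverse (l ?m)) X"
      have "Ra X' = lsm (- inverse (l ?m)) (Ra X)"
        unfolding Ra_def Sf_mult_def X'_def
        using rmod_lin[OF R df, of "- inverse (l ?m)" "skew_mult \<sigma> X a" 0]
        by (simp add: mul_lsm[OF R] rmod_0[OF R df])
      also have "Ra X = - lsm (l ?m) y" using e by (simp add: eq_neg_iff_add_eq_0 add.commute)
      also have "lsm (- inverse (l ?m)) (- lsm (l ?m) y) = y"
        using False by (simp add: lsm_minus lsm_uminus lsm_mult[symmetric])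
      finally have "Ra X' = y" .
      moreover have "X' \<in> Sf f" using dX degree_lsm[of "- inverse (l ?m)" X] by (simp add: X'_def Sf_def)
      ultimately show ?thesis by blast
    qed
  qed
  have "Ra ` Sf f = Sf f" using RaS sur by blast
  then show "bij_betw (\<lambda>x. Sf_mult \<sigma> f x a) (Sf f) (Sf f)"
    using inj unfolding bij_betw_def Ra_def by simp
qed

end



lemma coeff_mul_t:
  assumes R: "ring_endo \<sigma>"
  shows "coeff (skew_mult \<sigma> (monom 1 1) x) k = (if k = 0 then 0 else \<sigma> (coeff x (k - 1)))"
proof (cases k)
  case 0 then show ?thesis by (simp add: coeff_skew_mult[OF R])
next
  case (Suc j)
  have "(\<Sum>i\<le>k. coeff (monom 1 1) i * (\<sigma> ^^ i) (coeff x (k - i))) = coeff (monom (1::'a) 1) 1 * (\<sigma> ^^ 1) (coeff x (k - 1))"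
    by (rule sum_single) (use Suc in auto)
  then show ?thesis using Suc by (simp add: coeff_skew_mult[OF R])
qed

lemma mul_t_right:
  assumes R: "ring_endo \<sigma>"
  shows "skew_mult \<sigma> g (monom 1 1) = pCons 0 g"
proof (rule poly_eqI)
  fix k
  show "coeff (skew_mult \<sigma> g (monom 1 1)) k = coeff (pCons 0 g) k"
  proof (cases k)
    case 0 then show ?thesis by (simp add: coeff_skew_mult[OF R] re_zero[OF re_funpow[OF R]])
  next
    case (Suc j)
    have "(\<Sum>i\<le>k. coeff g i * (\<sigma> ^^ i) (coeff (monom 1 1) (k - i))) = coeff g j * (\<sigma> ^^ j) (coeff (monom 1 1) (k - j))"
      by (rule sum_single) (use Suc in \<open>auto simp: re_zero[OF re_funpow[OF R]]\<close>)
    then show ?thesis using Suc by (simp add: coeff_skew_mult[OF R] re_one[OF re_funpow[OF R]])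
  qed
qed

lemma pow_dep:
  assumes R: "ring_endo \<sigma>" and fixl: "\<forall>j\<le>k. \<sigma> (l j) = l j" and nz: "\<exists>j\<le>k. l j \<noteq> 0"
    and s0: "(\<Sum>j\<le>k. l j * (\<sigma> ^^ j) y) = 0"
  shows "y \<in> range \<sigma>"
proof -
  have fixp: "(\<sigma> ^^ n) (l j) = l j" if "j \<le> k" for n j
    by (induction n) (use fixl that in auto)
  define j0 where "j0 = (LEAST j. j \<le> k \<and> l j \<noteq> 0)"
  have j0: "j0 \<le> k" "l j0 \<noteq> 0" using LeastI_ex[OF nz[simplified Bex_def[symmetric]]]
    using nz unfolding j0_def by (metis (mono_tags, lifting) LeastI)+
  have below: "l j = 0" if "j < j0" for j
    using not_less_Least[of j "\<lambda>j. j \<le> k \<and> l j \<noteq> 0"] that j0(1) unfolding j0_def by auto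
  define Z where "Z = (\<Sum>j\<in>{j0<..k}. l j * (\<sigma> ^^ (j - Suc j0)) y)"
  have Rp: "ring_endo (\<sigma> ^^ n)" for n by (rule re_funpow[OF R])
  have pw: "(\<sigma> ^^ a) (\<sigma> ((\<sigma> ^^ b) y)) = (\<sigma> ^^ (a + Suc b)) y" for a b
    by (simp only: funpow_add comp_apply funpow.simps)
  have "(\<sigma> ^^ j0) (l j0 * y + \<sigma> Z) = l j0 * (\<sigma> ^^ j0) y + (\<Sum>j\<in>{j0<..k}. l j * (\<sigma> ^^ j) y)"
  proof -
    have "(\<sigma> ^^ j0) (\<sigma> Z) = (\<Sum>j\<in>{j0<..k}. l j * (\<sigma> ^^ j) y)"
      unfolding Z_def
      by (simp add: re_sum[OF R] re_sum[OF Rp] re_mult[OF R] re_mult[OF Rp] fixl fixp pw)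
    then show ?thesis by (simp add: re_add[OF Rp] re_mult[OF Rp] fixp j0)
  qed
  also have "\<dots> = (\<Sum>j\<in>insert j0 {j0<..k}. l j * (\<sigma> ^^ j) y)" by simp
  also have "\<dots> = (\<Sum>j\<le>k. l j * (\<sigma> ^^ j) y)"
    by (rule sum.mono_neutral_left) (use j0 below in \<open>auto simp: not_less\<close>)
  finally have "(\<sigma> ^^ j0) (l j0 * y + \<sigma> Z) = 0" using s0 by simp
  then have "l j0 * y + \<sigma> Z = 0" by (rule re_inj0[OF Rp])
  then have "l j0 * y = - \<sigma> Z" by (simp add: eq_neg_iff_add_eq_0)
  then have "inverse (l j0) * (l j0 * y) = - inverse (l j0) * \<sigma> Z" by simp
  then have "y = - inverse (l j0) * \<sigma> Z" using j0(2) by (simp add: mult.assoc[symmetric])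
  also have "\<dots> = \<sigma> (- inverse (l j0) * Z)"
    using j0 fixl by (simp add: re_mult[OF R] re_uminus[OF R] re_inverse[OF R])
  finally show ?thesis by blast
qed



context
  fixes \<sigma> :: "'a::division_ring \<Rightarrow> 'a" and f :: "'a poly"
  assumes R: "ring_endo \<sigma>" and df2: "2 \<le> degree f" and ns: "\<not> surj \<sigma>"
    and irr: "\<not> (\<exists>g h. degree g < degree f \<and> degree h < degree f \<and> f = skew_mult \<sigma> g h)"
begin

lemma df': "0 < degree f" using df2 by simp

lemma f0: "coeff f 0 \<noteq> 0"
proof
  assume c0: "coeff f 0 = 0"
  obtain a g where fg: "f = pCons a g" by (cases f)
  then have a0: "a = 0" using c0 by simp
  have g0: "g \<noteq> 0" using fg a0 df2 by auto
  have "f = skew_mult \<sigma> g (monom 1 1)" using mul_t_right[OF R] fg a0 by simp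
  moreover have "degree g < degree f" using fg g0 by simp
  moreover have "degree (monom (1::'a) 1) < degree f" using df2 by (simp add: degree_monom_eq)
  ultimately show False using irr by blast
qed

lemma not_ldiv: "\<not> Sf_left_division \<sigma> f"
proof
  assume L: "Sf_left_division \<sigma> f"
  obtain c where c: "c \<notin> range \<sigma>" using ns by auto
  define t :: "'a poly" where "t = monom 1 1"
  define y0 where "y0 = monom c 1"
  have dt: "degree t = 1" by (simp add: t_def degree_monom_eq)
  have tS: "t \<in> Sf f" "t \<noteq> 0" using df2 dt by (auto simp: Sf_def t_def)
  have dy: "degree y0 \<le> 1" by (simp add: y0_def degree_monom_le)
  have yS: "y0 \<in> Sf f" using dy df2 by (simp add: Sf_def)
  from L tS have "bij_betw (\<lambda>x. Sf_mult \<sigma> f t x) (Sf f) (Sf f)" unfolding Sf_left_division_def by blast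
  then obtain x where xS: "x \<in> Sf f" and xe: "Sf_mult \<sigma> f t x = y0"
    using yS unfolding bij_betw_def by (metis imageE)
  obtain q where q: "skew_mult \<sigma> t x = skew_mult \<sigma> q f + y0"
    using rmod_ex[OF R df', of "skew_mult \<sigma> t x"] xe unfolding Sf_mult_def by metis
  have dq: "degree q = 0"
  proof (rule ccontr)
    assume "degree q \<noteq> 0"
    then have q0: "q \<noteq> 0" by auto
    have "degree (skew_mult \<sigma> q f) = degree q + degree f"
      using degree_mul[OF R q0, of f] df' by (metis degree_0 less_irrefl)
    moreover have "skew_mult \<sigma> q f = skew_mult \<sigma> t x - y0" using q by simp
    moreover have "degree (skew_mult \<sigma> t x) \<le> degree f"
      using degree_mul_le[OF R, of t x] dt xS by (simp add: Sf_def)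
    ultimately have "degree q + degree f \<le> degree f"
      using degree_diff_le_max[of "skew_mult \<sigma> t x" y0] dy df2 by simp
    then show False using \<open>degree q \<noteq> 0\<close> by simp
  qed
  then have qc: "q = [:coeff q 0:]" using degree_0_id by metis
  have "coeff (skew_mult \<sigma> t x) 0 = 0" unfolding t_def using coeff_mul_t[OF R, of x 0] by simp
  then have "coeff q 0 * coeff f 0 = 0" using q qc mul_const[OF R, of "coeff q 0" f]
    by (simp add: y0_def)
  then have "coeff q 0 = 0" using f0 by simp
  then have "q = 0" using qc by simp
  then have "skew_mult \<sigma> t x = y0" using q by (simp add: mul_0[OF R])
  then have "coeff (skew_mult \<sigma> t x) 1 = c" by (simp add: y0_def)
  then have "\<sigma> (coeff x 0) = c" unfolding t_def using coeff_mul_t[OF R, of x 1] by simp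
  then show False using c by blast
qed

lemma not_fd: "\<not> Sf_finite_dim_over_S0 \<sigma> f"
proof
  assume "Sf_finite_dim_over_S0 \<sigma> f"
  then obtain B where B: "finite B" "B \<subseteq> Sf f"
    and sp: "\<forall>g\<in>Sf f. \<exists>c. (\<forall>b\<in>B. c b \<in> S0 \<sigma> f) \<and> g = (\<Sum>b\<in>B. Sf_mult \<sigma> f [:c b:] b)"
    unfolding Sf_finite_dim_over_S0_def by blast
  define K where "K = {c. \<sigma> c = c}"
  have K: "subdr K" unfolding subdr_def K_def
    by (simp add: re_one[OF R] re_zero[OF R] re_add[OF R] re_diff[OF R] re_mult[OF R] re_inverse[OF R])
  define t :: "'a poly" where "t = monom 1 1"
  have dt: "degree t = 1" by (simp add: t_def degree_monom_eq)
  have tS: "t \<in> Sf f" using df2 dt by (auto simp: Sf_def)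
  have S0K: "c \<in> K" if "c \<in> S0 \<sigma> f" for c
  proof -
    have e: "Sf_mult \<sigma> f [:c:] t = Sf_mult \<sigma> f t [:c:]" using that tS unfolding S0_def by blast
    have "Sf_mult \<sigma> f [:c:] t = lsm c t"
      unfolding Sf_mult_def mul_const[OF R]
      by (rule rmod_small[OF R df']) (use degree_lsm[of c t] dt df2 in simp)
    moreover have "Sf_mult \<sigma> f t [:c:] = skew_mult \<sigma> t [:c:]"
      unfolding Sf_mult_def
      by (rule rmod_small[OF R df']) (use degree_mul_le[OF R, of t "[:c:]"] dt df2 in simp)
    ultimately have "coeff (lsm c t) 1 = coeff (skew_mult \<sigma> t [:c:]) 1" using e by simp
    moreover have "coeff (skew_mult \<sigma> t [:c:]) 1 = \<sigma> c"
      unfolding t_def using coeff_mul_t[OF R, of "[:c:]" 1] by simp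
    ultimately show ?thesis unfolding t_def by (simp add: K_def)
  qed
  have smB: "Sf_mult \<sigma> f [:c:] b = lsm c b" if "b \<in> B" for b c
  proof -
    have "degree b < degree f" using that B(2) by (auto simp: Sf_def)
    then show ?thesis unfolding Sf_mult_def mul_const[OF R]
      by (intro rmod_small[OF R df']) (use degree_lsm[of c b] in simp)
  qed
  obtain y where y: "y \<notin> range \<sigma>" using ns by auto
  define k where "k = card B"
  define w where "w j = [:(\<sigma> ^^ j) y:]" for j
  have "\<forall>j\<in>{..k}. \<exists>c. (\<forall>b\<in>B. c b \<in> K) \<and> w j = (\<Sum>b\<in>B. lsm (c b) (id b))"
  proof
    fix j assume "j \<in> {..k}"
    have "w j \<in> Sf f" using df2 by (simp add: w_def Sf_def)
    then obtain c where c: "\<forall>b\<in>B. c b \<in> S0 \<sigma> f" "w j = (\<Sum>b\<in>B. Sf_mult \<sigma> f [:c b:] b)"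
      using sp by blast
    have "w j = (\<Sum>b\<in>B. lsm (c b) (id b))" using c(2) smB by simp
    then show "\<exists>c. (\<forall>b\<in>B. c b \<in> K) \<and> w j = (\<Sum>b\<in>B. lsm (c b) (id b))"
      using c(1) S0K by blast
  qed
  from steinitz[OF K B(1) _ _ this] obtain l where
    l: "\<forall>j\<in>{..k}. l j \<in> K" "\<exists>j\<in>{..k}. l j \<noteq> 0" "(\<Sum>j\<in>{..k}. lsm (l j) (w j)) = 0"
    by (auto simp: k_def)
  have "coeff (\<Sum>j\<in>{..k}. lsm (l j) (w j)) 0 = (\<Sum>j\<le>k. l j * (\<sigma> ^^ j) y)"
    by (simp add: coeff_sum w_def)
  then have "(\<Sum>j\<le>k. l j * (\<sigma> ^^ j) y) = 0" using l(3) by simp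
  moreover have "\<forall>j\<le>k. \<sigma> (l j) = l j" using l(1) by (auto simp: K_def)
  moreover have "\<exists>j\<le>k. l j \<noteq> 0" using l(2) by auto
  ultimately have "y \<in> range \<sigma>" using pow_dep[OF R] by blast
  then show False using y by blast
qed

end

theorem mainTheorem8:
  fixes \<sigma> :: "'a::division_ring \<Rightarrow> 'a" and f :: "'a poly"
  assumes "ring_endo \<sigma>"
    and "\<not> surj \<sigma>"
    and "lead_coeff f = 1"
    and "degree f \<ge> 2"
    and "skew_irreducible \<sigma> f"
  shows "Sf_no_zero_divisors \<sigma> f \<and> Sf_right_division \<sigma> f \<and> \<not> Sf_left_division \<sigma> f
         \<and> \<not> Sf_finite_dim_over_S0 \<sigma> f"
proof -
  have irr: "\<not> (\<exists>g h. degree g < degree f \<and> degree h < degree f \<and> f = skew_mult \<sigma> g h)"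
    using assms(5) unfolding skew_irreducible_def by blast
  show ?thesis
    using nzd[OF assms(1) assms(4) irr] rdiv[OF assms(1) assms(4) irr]
      not_ldiv[OF assms(1) assms(4) assms(2) irr] not_fd[OF assms(1) assms(4) assms(2) irr]
    by blast
qed


end
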